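(* Let $k,m\in\mathbb{N}$ with $m<k\le 2m$, $k$ even, and $\gcd(2k+1,2(2m+1))=1$; let $a>0$ satisfy $\frac{1}{4km+3k+m+1}\le\frac{a}{2k+1}\le\frac{1}{4km+k+3m+1}$. For $s=0,\dots,4m+1$, $n=0,\dots,2k$ define $X_{sn}=\frac{s}{2(2m+1)}-\frac{n}{2k+1}$ and $\Phi_{sn}(0,0)=\sum_{l\in\mathbb{Z}}Q_2\big(2a(2m+1)(l+X_{sn})\big)$ with $Q_2(x)=(1-|x|)\chi_{[-1,1]}(x)$. Let $A$ be the $2m\times k$ matrix with entries $A_{sn}=\Phi_{sn}(0,0)-\Phi_{s,2k+1-n}(0,0)$, $s=1,\dots,2m$, $n=1,\dots,k$. Then $\operatorname{rank}(A)\le k-1$. *)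

theory Defs
  imports "HOL-Analysis.Infinite_Sum" "Jordan_Normal_Form.DL_Rank"
begin

definition Q2 :: "real \<Rightarrow> real" where
  "Q2 x = (if \<bar>x\<bar> \<le> 1 then 1 - \<bar>x\<bar> else 0)"

definition Xsn :: "nat \<Rightarrow> nat \<Rightarrow> nat \<Rightarrow> nat \<Rightarrow> real" where
  "Xsn k m s n = real s / (2 * (2 * real m + 1)) - real n / (2 * real k + 1)"

definition Phi00 :: "nat \<Rightarrow> nat \<Rightarrow> real \<Rightarrow> nat \<Rightarrow> nat \<Rightarrow> real" where
  "Phi00 k m a s n = (\<Sum>\<^sub>\<infinity>l::int. Q2 (2 * a * (2 * real m + 1) * (real_of_int l + Xsn k m s n)))"

text \<open>The 2m x k matrix A with A_{sn} = Phi_{sn} - Phi_{s,2k+1-n}, s=1..2m, n=1..k,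
  stored 0-based: entry (i,j) is A_{i+1,j+1}.\<close>
definition Amat :: "nat \<Rightarrow> nat \<Rightarrow> real \<Rightarrow> real mat" where
  "Amat k m a = mat (2 * m) k (\<lambda>(i, j). Phi00 k m a (i + 1) (j + 1) - Phi00 k m a (i + 1) (2 * k + 1 - (j + 1)))"

end

theory Submission
  imports Defs
begin

lemma (in vec_space) rank_le_card_span:
  assumes A: "A \<in> carrier_mat n nc" and S: "S \<subseteq> carrier_vec n" "finite S"
    and sub: "set (cols A) \<subseteq> span S"
  shows "rank A \<le> card S"
proof -
  have vs: "vectorspace class_ring (vs (span S))" using span_is_subspace[THEN subspace_is_vs, of S] S by auto
  have sm: "submodule class_ring (span S) V" using S by (simp add: span_is_submodule)
  have sub2: "subspace class_ring (span (set (cols A))) (vs (span S))"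
    using vectorspace.span_is_subspace[OF vs, of "set (cols A)", unfolded
    span_li_not_depend(1)[OF sub sm]] sub by auto
  have fin_dim:"vectorspace.fin_dim class_ring (vs (span S))"
       "vectorspace.fin_dim class_ring (vs (span S)\<lparr>carrier := span (set (cols A))\<rparr>)"
    using fin_dim_span fin_dim_span_cols A S by auto
  have "S \<subseteq> span S" using S in_own_span by auto
  have gen: "LinearCombinations.module.span class_ring (vs (span S)) S = carrier (vs (span S))"
    using span_li_not_depend(1)[OF \<open>S \<subseteq> span S\<close> sm] by simp
  have "vectorspace.dim class_ring (vs (span S)) \<le> card S"
    using vectorspace.gen_ge_dim[OF vs S(2) _ gen] \<open>S \<subseteq> span S\<close> by simp
  then show ?thesis unfolding rank_def using vectorspace.subspace_dim[OF vs sub2 fin_dim(1) fin_dim(2)] by simp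
qed

lemma (in vec_space) span_pairs:
  assumes nm: "n = 2*m" and B: "B \<subseteq> {..<m}"
    and y: "y \<in> carrier_vec n"
    and eq: "\<And>i. i < m \<Longrightarrow> i \<notin> B \<Longrightarrow> y $ i = y $ (n - 1 - i)"
  shows "y \<in> span ((\<lambda>i. unit_vec n i + unit_vec n (n - 1 - i)) ` {..<m} \<union> (\<lambda>i. unit_vec n i) ` B)"
proof -
  define S :: "'a vec set" where "S = (\<lambda>i. unit_vec n i + unit_vec n (n - 1 - i)) ` {..<m} \<union> (\<lambda>i. unit_vec n i) ` B"
  have Sc: "S \<subseteq> carrier_vec n" unfolding S_def by auto
  have sm: "submodule class_ring (span S) V" using Sc by (simp add: span_is_submodule)
  have addc: "u + w \<in> span S" if "u \<in> span S" "w \<in> span S" for u w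
    using span_add1[OF Sc that] by (simp add: module_vec_simps)
  have smc: "r \<cdot>\<^sub>v u \<in> span S" if "u \<in> span S" for r u
    using submodule.smult_closed[OF sm] that by (simp add: module_vec_simps class_ring_simps)
  have memS: "u \<in> span S" if "u \<in> S" for u using that in_own_span[OF Sc] by auto
  define tr where "tr p = vec n (\<lambda>i. if i < p \<or> n - 1 - i < p then y $ i else 0)" for p
  have "tr p \<in> span S" if "p \<le> m" for p
    using that
  proof (induction p)
    case 0
    have "tr 0 = 0\<^sub>v n" unfolding tr_def by auto
    then show ?case using submodule.zero_closed[OF sm] by (simp add: module_vec_simps)
  next
    case (Suc p)
    then have IH: "tr p \<in> span S" and p: "p < m" by auto
    define b :: "'a vec" where "b = unit_vec n p + unit_vec n (n - 1 - p)"
    have bS: "b \<in> span S" unfolding b_def using p by (intro memS) (auto simp: S_def)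
    show ?case
    proof (cases "p \<in> B")
      case True
      have uS: "unit_vec n p \<in> span S" using True by (intro memS) (auto simp: S_def)
      have "tr (Suc p) = tr p + (y $ (n - 1 - p) \<cdot>\<^sub>v b + (y $ p - y $ (n - 1 - p)) \<cdot>\<^sub>v unit_vec n p)"
        
      proof (rule eq_vecI)
        fix i assume "i < dim_vec (tr p + (y $ (n - 1 - p) \<cdot>\<^sub>v b + (y $ p - y $ (n - 1 - p)) \<cdot>\<^sub>v unit_vec n p))"
        then have i: "i < n" by (simp add: tr_def b_def)
        show "tr (Suc p) $ i = (tr p + (y $ (n - 1 - p) \<cdot>\<^sub>v b + (y $ p - y $ (n - 1 - p)) \<cdot>\<^sub>v unit_vec n p)) $ i"
          using i p nm unfolding tr_def b_def
          by (cases "i = p"; cases "i = n - 1 - p") (simp_all add: unit_vec_def, (intro impI; elim conjE; arith)?)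
      qed (simp add: tr_def b_def)
      then show ?thesis using IH bS uS addc smc by simp
    next
      case False
      have "tr (Suc p) = tr p + y $ p \<cdot>\<^sub>v b"
        
      proof (rule eq_vecI)
        fix i assume "i < dim_vec (tr p + y $ p \<cdot>\<^sub>v b)"
        then have i: "i < n" by (simp add: tr_def b_def)
        show "tr (Suc p) $ i = (tr p + y $ p \<cdot>\<^sub>v b) $ i"
          using i p nm eq[OF p False] unfolding tr_def b_def
          by (cases "i = p"; cases "i = n - 1 - p") (simp_all add: unit_vec_def, (intro impI; elim conjE; arith)?)
      qed (simp add: tr_def b_def)
      then show ?thesis using IH bS addc smc by simp
    qed
  qed
  moreover have "tr m = y" unfolding tr_def using y nm by (intro eq_vecI) auto
  ultimately show ?thesis unfolding S_def by auto
qed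

definition Dd :: "int \<Rightarrow> int \<Rightarrow> int" where
  "Dd M x = min (x mod M) (M - x mod M)"

definition G :: "real \<Rightarrow> int \<Rightarrow> int \<Rightarrow> real" where
  "G c M x = Q2 (c * (of_int (x mod M) / of_int M)) + Q2 (c * (of_int (x mod M) / of_int M - 1))"

lemma Q2_zero: "\<bar>x\<bar> \<ge> 1 \<Longrightarrow> Q2 x = 0" by (auto simp: Q2_def)

lemma G_lin:
  fixes c :: real and M NN d x :: int
  assumes M: "M = 2 * NN" "NN > 0" and d: "0 \<le> d" and c0: "c \<ge> 0"
    and c1: "c * of_int (NN - d) \<le> of_int M" and c2: "c * of_int (NN + d) \<ge> of_int M"
    and D: "Dd M x \<le> NN - d"
  shows "G c M x = 1 - c * of_int (Dd M x) / of_int M"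
proof -
  define r where "r = x mod M"
  have r0: "0 \<le> r" and rM: "r < M" using M unfolding r_def by auto
  have Mpos: "(0::real) < of_int M" using M by simp
  show ?thesis
  proof (cases "r \<le> NN")
    case True
    then have Dr: "Dd M x = r" unfolding Dd_def r_def[symmetric] using M by simp
    have rle: "r \<le> NN - d" using D Dr by simp
    have "c * of_int r \<le> c * of_int (NN - d)" using rle c0 by (intro mult_left_mono) auto
    then have a1: "c * of_int r \<le> of_int M" using c1 by linarith
    have "c * of_int (NN + d) \<le> c * of_int (M - r)" using rle M c0 by (intro mult_left_mono) auto
    then have a2: "c * of_int (M - r) \<ge> of_int M" using c2 by linarith
    have e1: "c * (of_int r / of_int M) = c * of_int r / of_int M" by simp
    have q1: "Q2 (c * (of_int r / of_int M)) = 1 - c * of_int r / of_int M"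
      unfolding Q2_def using a1 Mpos r0 c0 by (auto simp: field_simps abs_le_iff)
    have e2: "c * (of_int r / of_int M - 1) = - (c * of_int (M - r) / of_int M)"
      using Mpos by (simp add: field_simps)
    have "c * of_int (M - r) / of_int M \<ge> 1" using a2 Mpos by (simp add: field_simps)
    then have q2: "Q2 (c * (of_int r / of_int M - 1)) = 0" unfolding e2 by (intro Q2_zero) linarith
    show ?thesis unfolding G_def r_def[symmetric] q1 q2 Dr by simp
  next
    case False
    then have Dr: "Dd M x = M - r" unfolding Dd_def r_def[symmetric] using M by simp
    have rle: "M - r \<le> NN - d" using D Dr by simp
    have "c * of_int (M - r) \<le> c * of_int (NN - d)" using rle c0 by (intro mult_left_mono) auto
    then have a1: "c * of_int (M - r) \<le> of_int M" using c1 by linarith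
    have "c * of_int (NN + d) \<le> c * of_int r" using rle M c0 by (intro mult_left_mono) auto
    then have a2: "c * of_int r \<ge> of_int M" using c2 by linarith
    have "c * of_int r / of_int M \<ge> 1" using a2 Mpos by (simp add: field_simps)
    then have q1: "Q2 (c * (of_int r / of_int M)) = 0" by (intro Q2_zero) (simp add: abs_if)
    have e2: "c * (of_int r / of_int M - 1) = - (c * of_int (M - r) / of_int M)"
      using Mpos by (simp add: field_simps)
    have "c * of_int (M - r) / of_int M \<le> 1" using a1 Mpos by (simp add: field_simps)
    moreover have "c * of_int (M - r) / of_int M \<ge> 0" using rM Mpos c0 by simp
    ultimately have q2: "Q2 (c * (of_int r / of_int M - 1)) = 1 - c * of_int (M - r) / of_int M"
      unfolding e2 Q2_def abs_minus_cancel by (simp only: abs_of_nonneg) simp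
    show ?thesis unfolding G_def r_def[symmetric] q1 q2 Dr by simp
  qed
qed

lemma Dd_mirror:
  assumes M: "M = 2 * NN" "NN > 0"
  shows "Dd M (NN - x) = NN - Dd M x"
proof -
  define r where "r = x mod M"
  have r0: "0 \<le> r" and rM: "r < M" using M unfolding r_def by auto
  have e: "(NN - x) mod M = (NN - r) mod M" unfolding r_def by (simp add: mod_diff_right_eq)
  show ?thesis
  proof (cases "r \<le> NN")
    case True
    then have "(NN - r) mod M = NN - r" using M r0 by (intro mod_pos_pos_trivial) auto
    then show ?thesis unfolding Dd_def e r_def[symmetric] using True M r0 by auto
  next
    case False
    have "(NN - r) mod M = (NN - r + M) mod M" by simp
    also have "\<dots> = NN - r + M" using M False rM by (intro mod_pos_pos_trivial) auto
    finally show ?thesis unfolding Dd_def e r_def[symmetric] using False M rM by auto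
  qed
qed

lemma Dd_le: assumes "M = 2 * NN" "NN > 0" shows "Dd M x \<le> NN" "0 \<le> Dd M x"
proof -
  have "0 \<le> x mod M" "x mod M < M" using assms by auto
  moreover have "min (x mod M) (M - x mod M) \<le> NN" if "0 \<le> x mod M" "x mod M < M"
    using that assms(1) by (cases "x mod M \<le> M - x mod M") (simp_all only: min_def if_True if_False; linarith)+
  moreover have "min (x mod M) (M - x mod M) \<ge> 0" if "0 \<le> x mod M" "x mod M < M"
    using that by simp
  ultimately show "Dd M x \<le> NN" "0 \<le> Dd M x" unfolding Dd_def by blast+
qed

lemma bad_hit:
  fixes K Mm NN M s t d x :: int
  assumes NN: "NN = K * Mm" and M: "M = 2 * NN" "NN > 0"
    and x: "x = s * K + Mm * t"
    and nb: "\<not> (d \<le> Dd M x \<and> Dd M x \<le> NN - d)"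
  shows "\<exists>i0. 0 \<le> i0 \<and> i0 < d \<and> (Mm dvd s * K - i0 \<or> Mm dvd s * K + i0)"
proof -
  define r where "r = x mod M"
  define z where "z = x div M"
  have xr: "x = M * z + r" unfolding r_def z_def by simp
  have h1: "Mm dvd (s * K - r)"
  proof
    show "s * K - r = Mm * (2 * K * z - t)" using xr x M NN by (simp add: algebra_simps)
  qed
  have h2: "Mm dvd M" "Mm dvd NN" using M NN by auto
  have Dle: "Dd M x \<le> NN" "0 \<le> Dd M x" using Dd_le[OF M] by auto
  have DD: "Dd M x = r \<or> Dd M x = M - r" unfolding Dd_def r_def by auto
  show ?thesis
  proof (cases "Dd M x < d")
    case True
    have "Mm dvd s * K - Dd M x \<or> Mm dvd s * K + Dd M x"
    proof (cases "Dd M x = r")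
      case True then show ?thesis using h1 by auto
    next
      case False
      then have "Dd M x = M - r" using DD by auto
      then have e: "s * K + Dd M x = (s * K - r) + M" by simp
      have "Mm dvd (s * K - r) + M" by (rule dvd_add[OF h1 h2(1)])
      then show ?thesis unfolding e[symmetric] by blast
    qed
    moreover have "0 \<le> Dd M x" "Dd M x < d" using True Dle by auto
    ultimately show ?thesis by blast
  next
    case False
    then have big: "Dd M x > NN - d" using nb by auto
    have "Mm dvd s * K - (NN - Dd M x) \<or> Mm dvd s * K + (NN - Dd M x)"
    proof (cases "Dd M x = r")
      case True
      then have e: "s * K + (NN - Dd M x) = (s * K - r) + NN" by simp
      have "Mm dvd (s * K - r) + NN" by (rule dvd_add[OF h1 h2(2)])
      then show ?thesis unfolding e[symmetric] by blast
    next
      case False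
      then have "Dd M x = M - r" using DD by auto
      then have e: "s * K - (NN - Dd M x) = (s * K - r) + (M - NN)" by simp
      have "Mm dvd (s * K - r) + (M - NN)" by (rule dvd_add[OF h1 dvd_diff[OF h2(1) h2(2)]])
      then show ?thesis unfolding e[symmetric] by blast
    qed
    moreover have "0 \<le> NN - Dd M x" "NN - Dd M x < d" using big Dle by auto
    ultimately show ?thesis by blast
  qed
qed

lemma small_dvd_zero:
  fixes Mm e :: int
  assumes "Mm dvd e" "\<bar>e\<bar> < Mm" shows "e = 0"
proof -
  obtain w where w: "e = Mm * w" using assms(1) by auto
  have Mm: "Mm > 0" using assms(2) by linarith
  show ?thesis
  proof (rule ccontr)
    assume "e \<noteq> 0" then have "w \<noteq> 0" using w by auto
    then have "\<bar>w\<bar> \<ge> 1" by linarith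
    then have "Mm * 1 \<le> Mm * \<bar>w\<bar>" using Mm by (intro mult_left_mono) auto
    then have "\<bar>e\<bar> \<ge> Mm" using w Mm by (simp add: abs_mult)
    then show False using assms(2) by linarith
  qed
qed

lemma hit_inj:
  fixes K Mm s1 s2 i0 :: int
  assumes cop: "coprime K Mm" and Mm: "Mm = 2 * m + 1"
    and s1: "1 \<le> s1" "s1 \<le> m" and s2: "1 \<le> s2" "s2 \<le> m"
    and h1: "Mm dvd s1 * K - i0 \<or> Mm dvd s1 * K + i0"
    and h2: "Mm dvd s2 * K - i0 \<or> Mm dvd s2 * K + i0"
  shows "s1 = s2"
proof -
  have dK: "Mm dvd e * K \<Longrightarrow> Mm dvd e" for e
    using cop by (metis coprime_commute coprime_dvd_mult_left_iff)
  have "Mm dvd (s1 - s2) * K \<or> Mm dvd (s1 + s2) * K"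
    using h1 h2
  proof (elim disjE)
    assume a: "Mm dvd s1 * K - i0" and b: "Mm dvd s2 * K - i0"
    have e: "(s1 - s2) * K = (s1 * K - i0) - (s2 * K - i0)" by (simp add: algebra_simps)
    have "Mm dvd (s1 - s2) * K" unfolding e by (rule dvd_diff[OF a b])
    then show ?thesis by blast
  next
    assume a: "Mm dvd s1 * K - i0" and b: "Mm dvd s2 * K + i0"
    have e: "(s1 + s2) * K = (s1 * K - i0) + (s2 * K + i0)" by (simp add: algebra_simps)
    have "Mm dvd (s1 + s2) * K" unfolding e by (rule dvd_add[OF a b])
    then show ?thesis by blast
  next
    assume a: "Mm dvd s1 * K + i0" and b: "Mm dvd s2 * K - i0"
    have e: "(s1 + s2) * K = (s1 * K + i0) + (s2 * K - i0)" by (simp add: algebra_simps)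
    have "Mm dvd (s1 + s2) * K" unfolding e by (rule dvd_add[OF a b])
    then show ?thesis by blast
  next
    assume a: "Mm dvd s1 * K + i0" and b: "Mm dvd s2 * K + i0"
    have e: "(s1 - s2) * K = (s1 * K + i0) - (s2 * K + i0)" by (simp add: algebra_simps)
    have "Mm dvd (s1 - s2) * K" unfolding e by (rule dvd_diff[OF a b])
    then show ?thesis by blast
  qed
  then have "Mm dvd (s1 - s2) \<or> Mm dvd (s1 + s2)" using dK by blast
  then show ?thesis
  proof
    assume "Mm dvd (s1 - s2)"
    then have "s1 - s2 = 0" using s1 s2 Mm by (intro small_dvd_zero) auto
    then show ?thesis by simp
  next
    assume "Mm dvd (s1 + s2)"
    then have "s1 + s2 = 0" using s1 s2 Mm by (intro small_dvd_zero) auto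
    then show ?thesis using s1 s2 by simp
  qed
qed

lemma hit_nonzero:
  fixes K Mm s :: int
  assumes cop: "coprime K Mm" and Mm: "Mm = 2 * m + 1"
    and s: "1 \<le> s" "s \<le> m"
    and h: "Mm dvd s * K - 0 \<or> Mm dvd s * K + 0"
  shows False
proof -
  have "Mm dvd s * K" using h by auto
  then have "Mm dvd s" using cop by (metis coprime_commute coprime_dvd_mult_left_iff)
  then have "s = 0" using s Mm by (intro small_dvd_zero) auto
  then show False using s by simp
qed


lemma phi_eval:
  fixes c :: real and M P :: int
  assumes c: "c \<ge> 1" and M: "M > 0"
  shows "(\<Sum>\<^sub>\<infinity>l::int. Q2 (c * (of_int l + of_int P / of_int M))) =
    Q2 (c * (of_int (P mod M) / of_int M)) + Q2 (c * (of_int (P mod M) / of_int M - 1))"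
proof -
  define q where "q = P div M"
  define r where "r = P mod M"
  have Pqr: "P = M * q + r" unfolding q_def r_def by simp
  have r0: "0 \<le> r" and rM: "r < M" using M unfolding r_def by auto
  have t0: "0 \<le> of_int r / (of_int M::real)" using r0 M by simp
  have t1: "of_int r / (of_int M::real) < 1" using rM M by simp
  have shift: "of_int l + of_int P / of_int M = of_int (l + q) + of_int r / (of_int M::real)" for l
    using M by (simp add: Pqr field_simps)
  have "(\<Sum>\<^sub>\<infinity>l::int. Q2 (c * (of_int l + of_int P / of_int M))) =
        (\<Sum>\<^sub>\<infinity>l\<in>{-q, -q-1}. Q2 (c * (of_int l + of_int P / of_int M)))"
  proof (rule infsum_cong_neutral)
    fix l assume "l \<in> UNIV - {-q, -q-1}"
    then have "l + q \<ge> 1 \<or> l + q \<le> -2" by auto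
    then have "\<bar>of_int (l + q) + of_int r / (of_int M::real)\<bar> \<ge> 1"
    proof
      assume "l + q \<ge> 1"
      then have "of_int (l+q) \<ge> (1::real)" by linarith
      then show ?thesis using t0 by linarith
    next
      assume "l + q \<le> -2"
      then have "of_int (l+q) \<le> (-2::real)" by linarith
      then show ?thesis using t1 by linarith
    qed
    then have "1 * 1 \<le> c * \<bar>of_int (l + q) + of_int r / (of_int M::real)\<bar>"
      using c by (intro mult_mono) auto
    then have "\<bar>c * (of_int (l + q) + of_int r / (of_int M::real))\<bar> \<ge> 1"
      using c by (simp add: abs_mult)
    then show "Q2 (c * (of_int l + of_int P / of_int M)) = 0" by (simp add: shift Q2_zero)
  qed auto
  also have "\<dots> = Q2 (c * (of_int r / of_int M)) + Q2 (c * (of_int r / of_int M - 1))"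
    by (simp add: shift)
  finally show ?thesis unfolding r_def .
qed

lemma aux_le1: fixes x y z :: real assumes "0 < y" "0 < z" "x / y \<le> 1 / z" shows "x * z \<le> y"
  using assms by (simp add: field_simps)

lemma aux_le2: fixes x y z :: real assumes "0 < y" "0 < z" "1 / z \<le> x / y" shows "y \<le> x * z"
  using assms by (simp add: field_simps)

theorem lemma3p14:
  fixes k m :: nat and a :: real
  assumes "m < k" and "k \<le> 2 * m" and "even k"
    and "gcd (2 * k + 1) (2 * (2 * m + 1)) = 1"
    and "a > 0"
    and "1 / (4 * real k * real m + 3 * real k + real m + 1) \<le> a / (2 * real k + 1)"
    and "a / (2 * real k + 1) \<le> 1 / (4 * real k * real m + real k + 3 * real m + 1)"
  shows "vec_space.rank (2 * m) (Amat k m a) \<le> k - 1"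
proof -
  define K where "K = 2 * int k + 1"
  define Mm where "Mm = 2 * int m + 1"
  define NN where "NN = K * Mm"
  define M where "M = 2 * NN"
  define d where "d = int k - int m"
  define c where "c = 2 * a * (2 * real m + 1)"
  have NNpos: "NN > 0" unfolding NN_def K_def Mm_def by simp
  have Mpos: "M > 0" using NNpos M_def by simp
  have d0: "0 \<le> d" using assms(1) d_def by simp
  have c0: "c \<ge> 0" using assms(5) c_def by simp
  have rNNm: "real_of_int (NN - d) = 4 * real k * real m + real k + 3 * real m + 1"
    unfolding NN_def K_def Mm_def d_def by (simp add: algebra_simps)
  have rNNp: "real_of_int (NN + d) = 4 * real k * real m + 3 * real k + real m + 1"
    unfolding NN_def K_def Mm_def d_def by (simp add: algebra_simps)
  have rM: "real_of_int M = 2 * (2 * real m + 1) * (2 * real k + 1)"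
    unfolding M_def NN_def K_def Mm_def by (simp add: algebra_simps)
  have p0: "0 \<le> 4 * real k * real m" by simp
  have p7: "(0::real) < 4 * real k * real m + real k + 3 * real m + 1" using p0 by linarith
  have p6: "(0::real) < 4 * real k * real m + 3 * real k + real m + 1" using p0 by linarith
  have pK: "(0::real) < 2 * real k + 1" by linarith
  have h7: "a * (4 * real k * real m + real k + 3 * real m + 1) \<le> 2 * real k + 1"
    by (rule aux_le1[OF pK p7 assms(7)])
  have h6: "a * (4 * real k * real m + 3 * real k + real m + 1) \<ge> 2 * real k + 1"
    by (rule aux_le2[OF pK p6 assms(6)])
  have c1: "c * of_int (NN - d) \<le> of_int M"
  proof -
    have "c * of_int (NN - d) = 2 * (2 * real m + 1) * (a * (4 * real k * real m + real k + 3 * real m + 1))"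
      unfolding rNNm c_def by (simp add: algebra_simps)
    also have "\<dots> \<le> 2 * (2 * real m + 1) * (2 * real k + 1)" using h7 by (intro mult_left_mono) auto
    finally show ?thesis unfolding rM .
  qed
  have c2: "c * of_int (NN + d) \<ge> of_int M"
  proof -
    have "c * of_int (NN + d) = 2 * (2 * real m + 1) * (a * (4 * real k * real m + 3 * real k + real m + 1))"
      unfolding rNNp c_def by (simp add: algebra_simps)
    moreover have "2 * (2 * real m + 1) * (2 * real k + 1) \<le> \<dots>" using h6 by (intro mult_left_mono) auto
    ultimately show ?thesis unfolding rM by simp
  qed
  have cge1: "c \<ge> 1"
  proof -
    have "NN + d \<le> M" unfolding M_def NN_def K_def Mm_def d_def by (simp add: algebra_simps)
    then have "c * of_int (NN + d) \<le> c * of_int M" using c0 by (intro mult_left_mono) auto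
    then have "of_int M \<le> c * of_int M" using c2 by linarith
    then show ?thesis using Mpos by simp
  qed
  have cop: "coprime K Mm"
  proof -
    have "coprime (2 * k + 1) (2 * (2 * m + 1))" using assms(4) by (simp add: coprime_iff_gcd_eq_1)
    then have "coprime (2 * k + 1) (2 * m + 1)" using coprime_mult_right_iff by blast
    then have "coprime (int (2 * k + 1)) (int (2 * m + 1))" by (simp only: coprime_int_iff)
    moreover have "int (2 * k + 1) = K" "int (2 * m + 1) = Mm" unfolding K_def Mm_def by simp_all
    ultimately show ?thesis by simp
  qed
  define Pm where "Pm s n = int s * K - 2 * int n * Mm" for s n :: nat
  define Pp where "Pp s n = int s * K + 2 * int n * Mm" for s n :: nat
  have Xeq: "Xsn k m s n = of_int (Pm s n) / of_int M" for s n
    unfolding Xsn_def Pm_def M_def NN_def K_def Mm_def by (simp add: field_simps)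
  have Phi: "Phi00 k m a s n = G c M (Pm s n)" for s n
  proof -
    have "Phi00 k m a s n = (\<Sum>\<^sub>\<infinity>l::int. Q2 (c * (of_int l + of_int (Pm s n) / of_int M)))"
      unfolding Phi00_def Xeq c_def by simp
    also have "\<dots> = G c M (Pm s n)" unfolding G_def using phi_eval[OF cge1 Mpos] by simp
    finally show ?thesis .
  qed
  have Gper: "G c M (x - M) = G c M x" for x unfolding G_def by simp
  have entry: "Amat k m a $$ (i, j) = G c M (Pm (i+1) (j+1)) - G c M (Pp (i+1) (j+1))"
    if "i < 2 * m" "j < k" for i j
  proof -
    have "Pm (i+1) (2 * k + 1 - (j + 1)) = Pp (i+1) (j+1) - M"
      using that unfolding Pm_def Pp_def M_def NN_def K_def by (simp add: of_nat_diff algebra_simps)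
    then show ?thesis using that unfolding Amat_def by (simp add: Phi Gper)
  qed
  define good where "good s n \<longleftrightarrow> d \<le> Dd M (Pm s n) \<and> Dd M (Pm s n) \<le> NN - d \<and>
      d \<le> Dd M (Pp s n) \<and> Dd M (Pp s n) \<le> NN - d" for s n
  define Bad where "Bad = {i. i < m \<and> \<not> (\<forall>j<k. good (i+1) (j+1))}"
  have Mdef: "M = 2 * NN" by (simp add: M_def)
  have glin: "G c M x = 1 - c * of_int (Dd M x) / of_int M" if "Dd M x \<le> NN - d" for x
    using G_lin[OF Mdef NNpos d0 c0 c1 c2 that] .
  have row_eq: "Amat k m a $$ (i, j) = Amat k m a $$ (2 * m - 1 - i, j)"
    if i: "i < m" "i \<notin> Bad" and j: "j < k" for i j
  proof -
    have g: "good (i+1) (j+1)" using i j unfolding Bad_def by auto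
    have s': "2 * m - 1 - i + 1 = 2 * m - i" using i by simp
    have e1: "Pm (2 * m - 1 - i + 1) (j+1) = NN - Pp (i+1) (j+1)"
      unfolding s' Pm_def Pp_def NN_def Mm_def using i by (simp add: of_nat_diff algebra_simps)
    have e2: "Pp (2 * m - 1 - i + 1) (j+1) = NN - Pm (i+1) (j+1)"
      unfolding s' Pm_def Pp_def NN_def Mm_def using i by (simp add: of_nat_diff algebra_simps)
    define x where "x = Pm (i+1) (j+1)"
    define y where "y = Pp (i+1) (j+1)"
    have gx: "d \<le> Dd M x" "Dd M x \<le> NN - d" and gy: "d \<le> Dd M y" "Dd M y \<le> NN - d"
      using g unfolding good_def x_def y_def by auto
    have mx: "Dd M (NN - x) = NN - Dd M x" and my: "Dd M (NN - y) = NN - Dd M y"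
      using Dd_mirror[OF Mdef NNpos] by auto
    have "Amat k m a $$ (i, j) = G c M x - G c M y" using entry i j x_def y_def by simp
    also have "\<dots> = (1 - c * of_int (Dd M x) / of_int M) - (1 - c * of_int (Dd M y) / of_int M)"
      using glin gx gy by simp
    also have "\<dots> = (1 - c * of_int (NN - Dd M y) / of_int M) - (1 - c * of_int (NN - Dd M x) / of_int M)"
      using Mpos by (simp add: field_simps)
    also have "\<dots> = G c M (NN - y) - G c M (NN - x)"
      using glin[of "NN - y"] glin[of "NN - x"] mx my gx gy by simp
    also have "\<dots> = Amat k m a $$ (2 * m - 1 - i, j)"
      using entry[of "2 * m - 1 - i" j] i j e1 e2 x_def y_def by simp
    finally show ?thesis .
  qed
  define hit where "hit s i0 \<longleftrightarrow> Mm dvd s * K - i0 \<or> Mm dvd s * K + i0" for s i0 :: int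
  have badhit: "\<exists>i0. 1 \<le> i0 \<and> i0 < d \<and> hit (int i + 1) i0" if "i \<in> Bad" for i
  proof -
    from that obtain j where i: "i < m" and j: "j < k" and ng: "\<not> good (i+1) (j+1)"
      unfolding Bad_def by auto
    have "\<exists>i0. 0 \<le> i0 \<and> i0 < d \<and> hit (int i + 1) i0"
    proof (cases "d \<le> Dd M (Pm (i+1) (j+1)) \<and> Dd M (Pm (i+1) (j+1)) \<le> NN - d")
      case True
      then have nb: "\<not> (d \<le> Dd M (Pp (i+1) (j+1)) \<and> Dd M (Pp (i+1) (j+1)) \<le> NN - d)"
        using ng unfolding good_def by auto
      have "Pp (i+1) (j+1) = (int i + 1) * K + Mm * (2 * int (j+1))" unfolding Pp_def by (simp add: algebra_simps)
      from bad_hit[OF NN_def Mdef NNpos this nb] show ?thesis unfolding hit_def .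
    next
      case False
      have "Pm (i+1) (j+1) = (int i + 1) * K + Mm * (- 2 * int (j+1))" unfolding Pm_def by (simp add: algebra_simps)
      from bad_hit[OF NN_def Mdef NNpos this False] show ?thesis unfolding hit_def .
    qed
    then obtain i0 where i0: "0 \<le> i0" "i0 < d" "hit (int i + 1) i0" by blast
    have "i0 \<noteq> 0"
    proof
      assume "i0 = 0"
      then show False using hit_nonzero[OF cop Mm_def, of "int i + 1"] i0(3) i unfolding hit_def by simp
    qed
    then have "1 \<le> i0" using i0 by linarith
    then show ?thesis using i0 by blast
  qed
  define f where "f i = (SOME i0. 1 \<le> i0 \<and> i0 < d \<and> hit (int i + 1) i0)" for i
  have fprop: "1 \<le> f i \<and> f i < d \<and> hit (int i + 1) (f i)" if "i \<in> Bad" for i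
    unfolding f_def using someI_ex[OF badhit[OF that]] .
  have finj: "inj_on f Bad"
  proof (rule inj_onI)
    fix i1 i2 assume a: "i1 \<in> Bad" "i2 \<in> Bad" "f i1 = f i2"
    have "i1 < m" "i2 < m" using a unfolding Bad_def by auto
    have "int i1 + 1 = int i2 + 1"
      using hit_inj[OF cop Mm_def, of "int i1 + 1" "int i2 + 1" "f i1"] fprop[OF a(1)] fprop[OF a(2)] a(3)
        \<open>i1 < m\<close> \<open>i2 < m\<close> unfolding hit_def by auto
    then show "i1 = i2" by simp
  qed
  have fimg: "f ` Bad \<subseteq> {1..d-1}" using fprop by force
  have cardBad: "card Bad \<le> k - m - 1"
  proof -
    have "card Bad = card (f ` Bad)" using finj by (simp add: card_image)
    also have "\<dots> \<le> card {1..d-1}" using fimg by (intro card_mono) auto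
    also have "\<dots> = k - m - 1" unfolding d_def by simp
    finally show ?thesis .
  qed
  interpret V: vec_space "TYPE(real)" "2 * m" .
  define S :: "real vec set" where "S = (\<lambda>i. unit_vec (2*m) i + unit_vec (2*m) (2*m - 1 - i)) ` {..<m} \<union> (\<lambda>i. unit_vec (2*m) i) ` Bad"
  have Acar: "Amat k m a \<in> carrier_mat (2 * m) k" unfolding Amat_def by simp
  have BadSub: "Bad \<subseteq> {..<m}" unfolding Bad_def by auto
  have Sc: "S \<subseteq> carrier_vec (2 * m)" unfolding S_def by auto
  have finS: "finite S" unfolding S_def using BadSub finite_subset by auto
  have colsS: "set (cols (Amat k m a)) \<subseteq> V.span S"
  proof
    fix v assume "v \<in> set (cols (Amat k m a))"
    then obtain j where j: "j < k" and v: "v = col (Amat k m a) j"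
      using Acar by (metis cols_length cols_nth in_set_conv_nth carrier_matD(2))
    show "v \<in> V.span S" unfolding S_def v
    proof (rule V.span_pairs[OF refl BadSub])
      show "col (Amat k m a) j \<in> carrier_vec (2 * m)" by (rule carrier_vecI) (simp add: Amat_def)
      fix i assume "i < m" "i \<notin> Bad"
      then show "col (Amat k m a) j $ i = col (Amat k m a) j $ (2 * m - 1 - i)"
        using row_eq[of i j] j Acar by auto
    qed
  qed
  have "V.rank (Amat k m a) \<le> card S" by (rule V.rank_le_card_span[OF Acar Sc finS colsS])
  also have "card S \<le> m + card Bad"
  proof -
    have "card S \<le> card ((\<lambda>i. unit_vec (2*m) i + unit_vec (2*m) (2*m - 1 - i)) ` {..<m} :: real vec set) + card ((\<lambda>i. unit_vec (2*m) i) ` Bad :: real vec set)"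
      unfolding S_def by (rule card_Un_le)
    also have "\<dots> \<le> card {..<m} + card Bad" by (intro add_mono card_image_le) (use BadSub finite_subset in auto)
    finally show ?thesis by simp
  qed
  also have "\<dots> \<le> k - 1" using cardBad assms(1) by linarith
  finally show ?thesis .
qed

end
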